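(* Let $(V,\nu)$ and $(W,\mu)$ be strongly complete PN-spaces and let $T\in B(V,W)$ be bijective. Then the inverse $T^{-1}:W\to V$ belongs to $B(W,V)$, i.e. it is a linear operator continuous for the strong topologies.
   Context: A distance distribution function is a map $F:[-\infty,+\infty]\to[0,1]$ that is nondecreasing, left-continuous on $\mathbb{R}$, with $F(-\infty)=0$, $F(+\infty)=1$ and $F(0)=0$; the set of these is $\Delta^+$. $\mathcal{D}^+\subseteq\Delta^+$ denotes the proper ones, i.e. those with $\lim_{x\to+\infty}F(x)=1$. $H_0\in\Delta^+$ is $H_0(x)=0$ for $x\le 0$ and $H_0(x)=1$ for $x>0$. For $F,G\in\Delta^+$ let $\tau_M(F,G)(x)=\sup\{\min(F(s),G(t)) : s+t=x\}$. In this paper a PN-space $(V,\nu)$ is a real vector space $V$ with a map $\nu:V\to\Delta^+$, $p\mapsto\nu_p$, such that for all $p,q\in V$: $\nu_p=H_0$ iff $p=0$; $\nu_{p+q}\ge\tau_M(\nu_p,\nu_q)$ pointwise; and $\nu_{\alpha p}(x)=\nu_p(x/|\alpha|)$ for all real $\alpha\neq0$ and $x\ge 0$. Standing assumption: $\nu_p\in\mathcal{D}^+$ for every $p\in V$. For $x\in V$ and $w\in(0,1)$ put $\|x\|_w=\sup\{t\in\mathbb{R}:\nu_x(t)<w\}$; for each $w$ this is a norm on $V$, and $w\mapsto\|x\|_w$ is nondecreasing. For $p\in V$, $r>0$, $w\in(0,1)$ put $B_w(p;r)=\{x\in V:\|x-p\|_w<r\}$. The strong topology on $V$ is generated by the neighbourhoods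 $N_p(t)=\{q\in V:\nu_{p-q}(t)>1-t\}$, $p\in V$, $t>0$; equivalently the family $\{B_w(p;r)\}$ is a basis for it. A sequence $(p_n)$ converges strongly to $p$ if for every $t>0$ one has $p_n\in N_p(t)$ for all large $n$; it is strongly Cauchy if for every $t>0$ there is $N$ with $\nu_{p_n-p_m}(t)>1-t$ for all $m,n>N$. $(V,\nu)$ is strongly complete if every strongly Cauchy sequence converges strongly. $B(V,W)$ denotes the set of linear operators $V\to W$ that are continuous for the strong topologies. *)

theory Defs
  imports "HOL-Analysis.Analysis"
begin

text \<open>Distance distribution functions, represented as maps from the extended reals to the reals.\<close>

definition ddf :: "(ereal \<Rightarrow> real) \<Rightarrow> bool" where
  "ddf F \<longleftrightarrow> (\<forall>x. 0 \<le> F x \<and> F x \<le> 1) \<and> mono F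
     \<and> (\<forall>x::real. ((\<lambda>y. F (ereal y)) \<longlongrightarrow> F (ereal x)) (at_left x))
     \<and> F (-\<infinity>) = 0 \<and> F \<infinity> = 1 \<and> F 0 = 0"

definition proper_ddf :: "(ereal \<Rightarrow> real) \<Rightarrow> bool" where
  "proper_ddf F \<longleftrightarrow> ddf F \<and> ((\<lambda>x. F (ereal x)) \<longlongrightarrow> 1) at_top"

definition H0 :: "ereal \<Rightarrow> real" where
  "H0 x = (if x \<le> 0 then 0 else 1)"

text \<open>tau_M(F,G)(x) for real x (at x = +/-infinity the triangle inequality is automatic).\<close>
definition tauM :: "(ereal \<Rightarrow> real) \<Rightarrow> (ereal \<Rightarrow> real) \<Rightarrow> real \<Rightarrow> real" where
  "tauM F G x = (SUP s::real. min (F (ereal s)) (G (ereal (x - s))))"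

definition PN_space :: "('a::real_vector \<Rightarrow> ereal \<Rightarrow> real) \<Rightarrow> bool" where
  "PN_space \<nu> \<longleftrightarrow>
     (\<forall>p. ddf (\<nu> p)) \<and>
     (\<forall>p. \<nu> p = H0 \<longleftrightarrow> p = 0) \<and>
     (\<forall>p q. \<forall>x::real. \<nu> (p + q) (ereal x) \<ge> tauM (\<nu> p) (\<nu> q) x) \<and>
     (\<forall>p (\<alpha>::real) (x::real). \<alpha> \<noteq> 0 \<and> x \<ge> 0 \<longrightarrow>
        \<nu> (\<alpha> *\<^sub>R p) (ereal x) = \<nu> p (ereal (x / \<bar>\<alpha>\<bar>)))"

definition proper_PN_space :: "('a::real_vector \<Rightarrow> ereal \<Rightarrow> real) \<Rightarrow> bool" where
  "proper_PN_space \<nu> \<longleftrightarrow> PN_space \<nu> \<and> (\<forall>p. proper_ddf (\<nu> p))"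

definition strong_nbhd :: "('a::real_vector \<Rightarrow> ereal \<Rightarrow> real) \<Rightarrow> 'a \<Rightarrow> real \<Rightarrow> 'a set" where
  "strong_nbhd \<nu> p t = {q. \<nu> (p - q) (ereal t) > 1 - t}"

definition strong_top :: "('a::real_vector \<Rightarrow> ereal \<Rightarrow> real) \<Rightarrow> 'a topology" where
  "strong_top \<nu> = topology (\<lambda>U. \<forall>p\<in>U. \<exists>t>0. strong_nbhd \<nu> p t \<subseteq> U)"

definition strong_conv :: "('a::real_vector \<Rightarrow> ereal \<Rightarrow> real) \<Rightarrow> (nat \<Rightarrow> 'a) \<Rightarrow> 'a \<Rightarrow> bool" where
  "strong_conv \<nu> s p \<longleftrightarrow> (\<forall>t>0. \<exists>N. \<forall>n\<ge>N. s n \<in> strong_nbhd \<nu> p t)"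

definition strong_Cauchy :: "('a::real_vector \<Rightarrow> ereal \<Rightarrow> real) \<Rightarrow> (nat \<Rightarrow> 'a) \<Rightarrow> bool" where
  "strong_Cauchy \<nu> s \<longleftrightarrow> (\<forall>t>0. \<exists>N. \<forall>m>N. \<forall>n>N. \<nu> (s n - s m) (ereal t) > 1 - t)"

definition strongly_complete :: "('a::real_vector \<Rightarrow> ereal \<Rightarrow> real) \<Rightarrow> bool" where
  "strongly_complete \<nu> \<longleftrightarrow> (\<forall>s. strong_Cauchy \<nu> s \<longrightarrow> (\<exists>p. strong_conv \<nu> s p))"

definition bounded_ops ::
  "('a::real_vector \<Rightarrow> ereal \<Rightarrow> real) \<Rightarrow> ('b::real_vector \<Rightarrow> ereal \<Rightarrow> real) \<Rightarrow> ('a \<Rightarrow> 'b) set" where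
  "bounded_ops \<nu> \<mu> = {T. linear T \<and> continuous_map (strong_top \<nu>) (strong_top \<mu>) T}"

end

theory Submission imports Defs begin

definition NN :: "('a::real_vector \<Rightarrow> ereal \<Rightarrow> real) \<Rightarrow> 'a \<Rightarrow> real" where
  "NN \<nu> x = Inf {t. t > 0 \<and> \<nu> x (ereal t) > 1 - t}"

lemma ddf_basic:
  assumes "ddf F"
  shows "0 \<le> F x" "F x \<le> 1" "a \<le> b \<Longrightarrow> F a \<le> F b"
  using assms unfolding ddf_def mono_def by auto

lemma ddf_nonpos: assumes "ddf F" "t \<le> 0" shows "F (ereal t) = 0"
proof -
  have "F (ereal t) \<le> F 0" using ddf_basic(3)[OF assms(1)] assms(2) by (simp add: zero_ereal_def)
  then show ?thesis using assms ddf_basic(1)[OF assms(1), of "ereal t"] unfolding ddf_def by auto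
qed

context
  fixes \<nu> :: "'a::real_vector \<Rightarrow> ereal \<Rightarrow> real"
  assumes PN: "PN_space \<nu>"
begin

lemma dd: "ddf (\<nu> p)" using PN unfolding PN_space_def by auto

lemma Sbdd: "bdd_below {t. t > 0 \<and> \<nu> x (ereal t) > 1 - t}"
  by (rule bdd_belowI[of _ 0]) auto

lemma Sne: "2 \<in> {t. t > 0 \<and> \<nu> x (ereal t) > 1 - t}"
  using ddf_basic(1)[OF dd, of x "ereal 2"] by auto

lemma NN_nonneg: "NN \<nu> x \<ge> 0"
  unfolding NN_def by (rule cInf_greatest) (use Sne[of x] in blast, auto)

lemma NN_less: assumes "NN \<nu> x < t" shows "\<nu> x (ereal t) > 1 - t"
proof -
  obtain s where s: "s > 0" "\<nu> x (ereal s) > 1 - s" "s < t"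
    using cInf_lessD[OF _ assms[unfolded NN_def]] Sne by blast
  have "\<nu> x (ereal s) \<le> \<nu> x (ereal t)" using ddf_basic(3)[OF dd] s by auto
  then show ?thesis using s by auto
qed

lemma NN_le: assumes "t > 0" "\<nu> x (ereal t) > 1 - t" shows "NN \<nu> x \<le> t"
  unfolding NN_def by (rule cInf_lower) (use assms Sbdd in auto)

lemma NN_zero[simp]: "NN \<nu> 0 = 0"
proof -
  have "\<nu> 0 = H0" using PN unfolding PN_space_def by auto
  then have "NN \<nu> 0 \<le> t" if "t > 0" for t
    using that by (intro NN_le) (auto simp: H0_def)
  then show ?thesis using NN_nonneg[of 0] by (meson dense_ge order.antisym)
qed

lemma NN_eq0: assumes "NN \<nu> x = 0" shows "x = 0"
proof -
  have pos: "\<nu> x (ereal r) = 1" if "r > 0" for r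
  proof (rule ccontr)
    assume ne: "\<nu> x (ereal r) \<noteq> 1"
    have le1: "\<nu> x (ereal r) \<le> 1" using ddf_basic(2)[OF dd] .
    define s where "s = min (r/2) ((1 - \<nu> x (ereal r))/2)"
    have s0: "s > 0" using that ne le1 by (auto simp: s_def)
    have "\<nu> x (ereal s) > 1 - s" using NN_less[of x s] assms s0 by auto
    moreover have "s \<le> r" using that by (simp add: s_def)
    then have "\<nu> x (ereal s) \<le> \<nu> x (ereal r)" using ddf_basic(3)[OF dd] by simp
    moreover have "s \<le> (1 - \<nu> x (ereal r))/2" unfolding s_def by (rule min.cobounded2)
    ultimately show False using le1 ne s0 by argo
  qed
  have "\<nu> x = H0"
  proof
    fix y :: ereal
    show "\<nu> x y = H0 y"
    proof (cases y)
      case (real r)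
      then show ?thesis using pos ddf_nonpos[OF dd, of r x]
        by (cases "r > 0") (auto simp: H0_def)
    next
      case PInf then show ?thesis using dd[of x] by (auto simp: ddf_def H0_def)
    next
      case MInf then show ?thesis using dd[of x] by (auto simp: ddf_def H0_def)
    qed
  qed
  then show ?thesis using PN unfolding PN_space_def by auto
qed

lemma NN_scale_le: assumes "\<bar>c\<bar> \<le> 1" shows "NN \<nu> (c *\<^sub>R x) \<le> NN \<nu> x"
proof (cases "c = 0")
  case True then show ?thesis using NN_nonneg by simp
next
  case False
  show ?thesis
  proof (rule dense_ge)
    fix t assume t: "NN \<nu> x < t"
    have t0: "t > 0" using t NN_nonneg[of x] by linarith
    have "\<nu> (c *\<^sub>R x) (ereal t) = \<nu> x (ereal (t / \<bar>c\<bar>))"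
      using PN False t0 unfolding PN_space_def by auto
    moreover have "t \<le> t / \<bar>c\<bar>" using assms False t0
      by (simp add: le_divide_eq)
    then have "\<nu> x (ereal t) \<le> \<nu> x (ereal (t / \<bar>c\<bar>))" using ddf_basic(3)[OF dd] by auto
    ultimately show "NN \<nu> (c *\<^sub>R x) \<le> t" using NN_less[OF t] t0 by (intro NN_le) auto
  qed
qed

lemma NN_minus: "NN \<nu> (- x) = NN \<nu> x"
  using NN_scale_le[of "-1" x] NN_scale_le[of "-1" "-x"] by simp

lemma NN_commute: "NN \<nu> (x - y) = NN \<nu> (y - x)"
  using NN_minus[of "x - y"] by simp

lemma NN_triangle: "NN \<nu> (x + y) \<le> NN \<nu> x + NN \<nu> y"
proof (rule dense_ge)
  fix u assume u: "NN \<nu> x + NN \<nu> y < u"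
  define e where "e = (u - NN \<nu> x - NN \<nu> y) / 2"
  have e0: "e > 0" using u by (simp add: e_def)
  define s where "s = NN \<nu> x + e"
  define t where "t = NN \<nu> y + e"
  have s0: "s > 0" and t0: "t > 0" using e0 NN_nonneg[of x] NN_nonneg[of y] by (auto simp: s_def t_def)
  have hs: "\<nu> x (ereal s) > 1 - s" using NN_less e0 by (simp add: s_def)
  have ht: "\<nu> y (ereal t) > 1 - t" using NN_less e0 by (simp add: t_def)
  have "min (\<nu> x (ereal s)) (\<nu> y (ereal (s + t - s))) \<le> tauM (\<nu> x) (\<nu> y) (s + t)"
    unfolding tauM_def
    by (rule cSUP_upper) (auto intro!: bdd_aboveI[of _ 1] simp: min_le_iff_disj ddf_basic(2)[OF dd])
  also have "\<dots> \<le> \<nu> (x + y) (ereal (s + t))" using PN unfolding PN_space_def by auto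
  finally have "\<nu> (x + y) (ereal (s + t)) > 1 - (s + t)" using hs ht s0 t0 by auto
  then have "NN \<nu> (x + y) \<le> s + t" using s0 t0 by (intro NN_le) auto
  then show "NN \<nu> (x + y) \<le> u" by (simp add: s_def t_def e_def)
qed

lemma NN_diff_triangle: "NN \<nu> (x - z) \<le> NN \<nu> (x - y) + NN \<nu> (y - z)"
  using NN_triangle[of "x - y" "y - z"] by simp

lemma NN_sum: "NN \<nu> (sum f A) \<le> (\<Sum>i\<in>A. NN \<nu> (f i))"
proof (induction A rule: infinite_finite_induct)
  case (insert a A)
  then show ?case using NN_triangle[of "f a" "sum f A"] by simp
qed auto

lemma NN_nat_scale: "NN \<nu> (real k *\<^sub>R x) \<le> real k * NN \<nu> x"
proof (induction k)
  case (Suc k)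
  have "NN \<nu> (real (Suc k) *\<^sub>R x) = NN \<nu> (x + real k *\<^sub>R x)" by (simp add: algebra_simps)
  also have "\<dots> \<le> NN \<nu> x + NN \<nu> (real k *\<^sub>R x)" by (rule NN_triangle)
  finally show ?case using Suc by (simp add: algebra_simps)
qed simp

end

lemma NN_small:
  assumes "proper_PN_space \<nu>" "e > 0"
  shows "\<exists>k. NN \<nu> ((1 / real (Suc k)) *\<^sub>R x) < e"
proof -
  have PN: "PN_space \<nu>" using assms unfolding proper_PN_space_def by auto
  have lim: "((\<lambda>s. \<nu> x (ereal s)) \<longlongrightarrow> 1) at_top"
    using assms unfolding proper_PN_space_def proper_ddf_def by auto
  define t where "t = e / 2"
  have t0: "t > 0" using assms by (simp add: t_def)
  have "eventually (\<lambda>s. \<nu> x (ereal s) > 1 - t) at_top"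
    using lim t0 by (intro order_tendstoD(1)) auto
  then obtain S where S: "\<And>s. s \<ge> S \<Longrightarrow> \<nu> x (ereal s) > 1 - t"
    by (auto simp: eventually_at_top_linorder)
  obtain k :: nat where k: "S / t \<le> real k" using real_arch_simple by blast
  define c where "c = 1 / real (Suc k)"
  have c0: "c > 0" "c \<noteq> 0" "\<bar>c\<bar> = c" by (auto simp: c_def)
  have "\<nu> (c *\<^sub>R x) (ereal t) = \<nu> x (ereal (t / c))"
    using PN c0 t0 unfolding PN_space_def by auto
  also have "t / c = t * real (Suc k)" by (simp add: c_def)
  finally have eq: "\<nu> (c *\<^sub>R x) (ereal t) = \<nu> x (ereal (t * real (Suc k)))" .
  have "S \<le> t * real (Suc k)"
  proof -
    have "S \<le> t * real k" using k t0 by (simp add: divide_le_eq mult.commute)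
    also have "\<dots> \<le> t * real (Suc k)" using t0 by simp
    finally show ?thesis .
  qed
  then have "\<nu> (c *\<^sub>R x) (ereal t) > 1 - t" using S eq by auto
  then have "NN \<nu> (c *\<^sub>R x) \<le> t" using NN_le[OF PN] t0 by auto
  then show ?thesis using t0 by (auto simp: c_def t_def intro!: exI[of _ k])
qed


lemma istop_strong:
  assumes PN: "PN_space \<nu>"
  shows "istopology (\<lambda>U. \<forall>p\<in>U. \<exists>t>0. strong_nbhd \<nu> p t \<subseteq> U)"
  unfolding istopology_def
proof (intro conjI allI impI)
  fix S T
  assume S: "\<forall>p\<in>S. \<exists>t>0. strong_nbhd \<nu> p t \<subseteq> S" and T: "\<forall>p\<in>T. \<exists>t>0. strong_nbhd \<nu> p t \<subseteq> T"
  have mono: "strong_nbhd \<nu> p t \<subseteq> strong_nbhd \<nu> p t'" if "t \<le> t'" for p t t'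
  proof
    fix q assume "q \<in> strong_nbhd \<nu> p t"
    moreover have "\<nu> (p - q) (ereal t) \<le> \<nu> (p - q) (ereal t')"
      using ddf_basic(3)[OF dd[OF PN]] that by auto
    ultimately show "q \<in> strong_nbhd \<nu> p t'" using that by (auto simp: strong_nbhd_def)
  qed
  show "\<forall>p\<in>S \<inter> T. \<exists>t>0. strong_nbhd \<nu> p t \<subseteq> S \<inter> T"
  proof
    fix p assume "p \<in> S \<inter> T"
    then obtain t1 t2 where "t1 > 0" "strong_nbhd \<nu> p t1 \<subseteq> S" "t2 > 0" "strong_nbhd \<nu> p t2 \<subseteq> T"
      using S T by blast
    then have "strong_nbhd \<nu> p (min t1 t2) \<subseteq> S" "strong_nbhd \<nu> p (min t1 t2) \<subseteq> T"
      using subset_trans[OF mono[of "min t1 t2" t1 p]] subset_trans[OF mono[of "min t1 t2" t2 p]] by auto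
    then have "strong_nbhd \<nu> p (min t1 t2) \<subseteq> S \<inter> T" by (rule Int_greatest)
    moreover have "min t1 t2 > 0" using \<open>t1 > 0\<close> \<open>t2 > 0\<close> by simp
    ultimately show "\<exists>t>0. strong_nbhd \<nu> p t \<subseteq> S \<inter> T" by blast
  qed
next
  fix K :: "'a set set"
  assume "\<forall>S\<in>K. \<forall>p\<in>S. \<exists>t>0. strong_nbhd \<nu> p t \<subseteq> S"
  then show "\<forall>p\<in>\<Union>K. \<exists>t>0. strong_nbhd \<nu> p t \<subseteq> \<Union>K"
    by (meson Union_iff Sup_upper order_trans)
qed

lemma openin_strong:
  assumes PN: "PN_space \<nu>"
  shows "openin (strong_top \<nu>) U \<longleftrightarrow> (\<forall>p\<in>U. \<exists>t>0. \<forall>q. NN \<nu> (p - q) < t \<longrightarrow> q \<in> U)"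
proof -
  have "openin (strong_top \<nu>) U \<longleftrightarrow> (\<forall>p\<in>U. \<exists>t>0. strong_nbhd \<nu> p t \<subseteq> U)"
    unfolding strong_top_def using topology_inverse'[OF istop_strong[OF PN]] by simp
  also have "\<dots> \<longleftrightarrow> (\<forall>p\<in>U. \<exists>t>0. \<forall>q. NN \<nu> (p - q) < t \<longrightarrow> q \<in> U)"
  proof (intro ball_cong refl iffI)
    fix p assume "\<exists>t>0. strong_nbhd \<nu> p t \<subseteq> U"
    then obtain t where t: "t > 0" "strong_nbhd \<nu> p t \<subseteq> U" by blast
    have "q \<in> U" if "NN \<nu> (p - q) < t" for q
      using NN_less[OF PN that] t by (auto simp: strong_nbhd_def)
    then show "\<exists>t>0. \<forall>q. NN \<nu> (p - q) < t \<longrightarrow> q \<in> U" using t by blast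
  next
    fix p assume "\<exists>t>0. \<forall>q. NN \<nu> (p - q) < t \<longrightarrow> q \<in> U"
    then obtain t where t: "t > 0" "\<forall>q. NN \<nu> (p - q) < t \<longrightarrow> q \<in> U" by blast
    have "q \<in> U" if "q \<in> strong_nbhd \<nu> p (t/2)" for q
    proof -
      have "NN \<nu> (p - q) \<le> t/2" using that t by (intro NN_le[OF PN]) (auto simp: strong_nbhd_def)
      then show ?thesis using t by auto
    qed
    then show "\<exists>t>0. strong_nbhd \<nu> p t \<subseteq> U" using t by (intro exI[of _ "t/2"]) auto
  qed
  finally show ?thesis .
qed

lemma topspace_strong: assumes "PN_space \<nu>" shows "topspace (strong_top \<nu>) = UNIV"
proof -
  have "openin (strong_top \<nu>) UNIV" by (subst openin_strong[OF assms]) (auto intro: exI[of _ 1])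
  then show ?thesis using openin_subset[of "strong_top \<nu>" UNIV] by auto
qed

lemma cont0:
  assumes PNv: "PN_space \<nu>" and PNm: "PN_space \<mu>" and lin: "linear T"
    and cont: "continuous_map (strong_top \<nu>) (strong_top \<mu>) T" and e: "e > 0"
  shows "\<exists>d>0. \<forall>x. NN \<nu> x < d \<longrightarrow> NN \<mu> (T x) < e"
proof -
  define U where "U = {y. NN \<mu> y < e}"
  have "openin (strong_top \<mu>) U"
    unfolding openin_strong[OF PNm]
  proof
    fix p assume p: "p \<in> U"
    have "q \<in> U" if "NN \<mu> (p - q) < e - NN \<mu> p" for q
    proof -
      have "NN \<mu> q = NN \<mu> (p + (q - p))" by simp
      also have "\<dots> \<le> NN \<mu> p + NN \<mu> (q - p)" by (rule NN_triangle[OF PNm])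
      finally show ?thesis using that NN_commute[OF PNm, of p q] by (auto simp: U_def)
    qed
    moreover have "e - NN \<mu> p > 0" using p by (simp add: U_def)
    ultimately show "\<exists>t>0. \<forall>q. NN \<mu> (p - q) < t \<longrightarrow> q \<in> U" by blast
  qed
  then have "openin (strong_top \<nu>) {x \<in> topspace (strong_top \<nu>). T x \<in> U}"
    using cont unfolding continuous_map_def by blast
  then have "openin (strong_top \<nu>) {x. T x \<in> U}" using topspace_strong[OF PNv] by simp
  moreover have "0 \<in> {x. T x \<in> U}" using e linear_0[OF lin] NN_zero[OF PNm] by (simp add: U_def)
  ultimately obtain t where t: "t > 0" "\<forall>q. NN \<nu> (0 - q) < t \<longrightarrow> T q \<in> U"
    unfolding openin_strong[OF PNv] by blast
  then show ?thesis using NN_minus[OF PNv] by (intro exI[of _ t]) (auto simp: U_def)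
qed


lemma approx_lemma:
  fixes \<nu> :: "'a::real_vector \<Rightarrow> ereal \<Rightarrow> real" and \<mu> :: "'b::real_vector \<Rightarrow> ereal \<Rightarrow> real"
    and T :: "'a \<Rightarrow> 'b"
  assumes pv: "proper_PN_space \<nu>" and pm: "proper_PN_space \<mu>"
    and cm: "strongly_complete \<mu>" and lin: "linear T" and bij: "bij T" and r: "r > 0"
  shows "\<exists>\<delta>>0. \<forall>z. NN \<mu> z < \<delta> \<longrightarrow> (\<forall>\<epsilon>>0. \<exists>x. NN \<nu> x < r \<and> NN \<mu> (z - T x) < \<epsilon>)"
proof -
  have PNv: "PN_space \<nu>" and PNm: "PN_space \<mu>" using pv pm by (auto simp: proper_PN_space_def)
  interpret M: Metric_space "UNIV::'b set" "\<lambda>x y. NN \<mu> (x - y)"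
  proof
    show "0 \<le> NN \<mu> (x - y)" for x y by (rule NN_nonneg[OF PNm])
    show "NN \<mu> (x - y) = NN \<mu> (y - x)" for x y by (rule NN_commute[OF PNm])
    show "(NN \<mu> (x - y) = 0) = (x = y)" for x y
      using NN_eq0[OF PNm, of "x - y"] NN_zero[OF PNm] by auto
    show "NN \<mu> (x - z) \<le> NN \<mu> (x - y) + NN \<mu> (y - z)" for x y z
      by (rule NN_diff_triangle[OF PNm])
  qed
  have mc: "M.mcomplete"
    unfolding M.mcomplete_def
  proof (intro allI impI)
    fix \<sigma> assume "M.MCauchy \<sigma>"
    then have C: "\<forall>\<epsilon>>0. \<exists>N. \<forall>n n'. N \<le> n \<longrightarrow> N \<le> n' \<longrightarrow> NN \<mu> (\<sigma> n - \<sigma> n') < \<epsilon>"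
      unfolding M.MCauchy_def by simp
    have "strong_Cauchy \<mu> \<sigma>"
      unfolding strong_Cauchy_def
    proof (intro allI impI)
      fix t :: real assume t: "t > 0"
      then obtain N where N: "\<forall>n n'. N \<le> n \<longrightarrow> N \<le> n' \<longrightarrow> NN \<mu> (\<sigma> n - \<sigma> n') < t" using C by blast
      have "\<mu> (\<sigma> n - \<sigma> m) (ereal t) > 1 - t" if "m > N" "n > N" for m n
        using NN_less[OF PNm] N that by simp
      then show "\<exists>N. \<forall>m>N. \<forall>n>N. 1 - t < \<mu> (\<sigma> n - \<sigma> m) (ereal t)" by blast
    qed
    then obtain p where p: "strong_conv \<mu> \<sigma> p" using cm unfolding strongly_complete_def by blast
    have "\<forall>\<epsilon>>0. eventually (\<lambda>n. NN \<mu> (\<sigma> n - p) < \<epsilon>) sequentially"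
    proof (intro allI impI)
      fix \<epsilon> :: real assume e: "\<epsilon> > 0"
      then obtain N where N: "\<forall>n\<ge>N. \<sigma> n \<in> strong_nbhd \<mu> p (\<epsilon>/2)" using p unfolding strong_conv_def
        by (meson half_gt_zero)
      have "NN \<mu> (\<sigma> n - p) < \<epsilon>" if "n \<ge> N" for n
      proof -
        have "NN \<mu> (p - \<sigma> n) \<le> \<epsilon>/2" using N that e
          by (intro NN_le[OF PNm]) (auto simp: strong_nbhd_def)
        then show ?thesis using e NN_commute[OF PNm, of p "\<sigma> n"] by simp
      qed
      then show "eventually (\<lambda>n. NN \<mu> (\<sigma> n - p) < \<epsilon>) sequentially"
        unfolding eventually_sequentially by blast
    qed
    then show "\<exists>x. limitin M.mtopology \<sigma> x sequentially"
      unfolding M.limitin_metric by auto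
  qed
  define F where "F k = {y. \<forall>\<epsilon>>0. \<exists>a. NN \<nu> a < r/2 \<and> NN \<mu> ((1 / real (Suc k)) *\<^sub>R y - T a) < \<epsilon>}" for k
  have closed: "closedin M.mtopology (F k)" for k
    unfolding closedin_def M.topspace_mtopology M.openin_mtopology
  proof (intro conjI allI impI subset_UNIV)
    fix x assume "x \<in> UNIV - F k"
    then have "\<not> (\<forall>\<epsilon>>0. \<exists>a. NN \<nu> a < r/2 \<and> NN \<mu> ((1 / real (Suc k)) *\<^sub>R x - T a) < \<epsilon>)"
      unfolding F_def by simp
    then obtain \<epsilon> where e: "\<epsilon> > 0" and ea0: "\<forall>a. NN \<nu> a < r/2 \<longrightarrow> \<not> NN \<mu> ((1 / real (Suc k)) *\<^sub>R x - T a) < \<epsilon>"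
      by blast
    have ea: "NN \<mu> ((1 / real (Suc k)) *\<^sub>R x - T a) \<ge> \<epsilon>" if "NN \<nu> a < r/2" for a
      using ea0 that by (simp add: not_less)
    have "y \<notin> F k" if y: "NN \<mu> (x - y) < \<epsilon>/2" for y
    proof
      assume "y \<in> F k"
      then have "\<forall>\<epsilon>>0. \<exists>a. NN \<nu> a < r/2 \<and> NN \<mu> ((1 / real (Suc k)) *\<^sub>R y - T a) < \<epsilon>"
        by (simp add: F_def)
      then obtain a where a: "NN \<nu> a < r/2" "NN \<mu> ((1 / real (Suc k)) *\<^sub>R y - T a) < \<epsilon>/2"
        using e by (meson half_gt_zero)
      have "NN \<mu> ((1 / real (Suc k)) *\<^sub>R x - T a)
          \<le> NN \<mu> ((1 / real (Suc k)) *\<^sub>R x - (1 / real (Suc k)) *\<^sub>R y) + NN \<mu> ((1 / real (Suc k)) *\<^sub>R y - T a)"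
        by (rule NN_diff_triangle[OF PNm])
      also have "NN \<mu> ((1 / real (Suc k)) *\<^sub>R x - (1 / real (Suc k)) *\<^sub>R y) = NN \<mu> ((1 / real (Suc k)) *\<^sub>R (x - y))"
        by (simp add: scaleR_diff_right)
      also have "\<dots> \<le> NN \<mu> (x - y)" by (rule NN_scale_le[OF PNm]) simp
      finally have "NN \<mu> ((1 / real (Suc k)) *\<^sub>R x - T a) < \<epsilon>" using y a by simp
      then show False using ea[OF a(1)] by simp
    qed
    then have "M.mball x (\<epsilon>/2) \<subseteq> UNIV - F k" unfolding M.mball_def by auto
    then show "\<exists>r>0. M.mball x r \<subseteq> UNIV - F k" using e by (intro exI[of _ "\<epsilon>/2"]) auto
  qed
  have cover: "\<Union>(range F) = UNIV"
  proof -
    have "y \<in> F (SOME k. NN \<nu> ((1 / real (Suc k)) *\<^sub>R inv T y) < r/2)" for y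
    proof -
      define k where "k = (SOME k. NN \<nu> ((1 / real (Suc k)) *\<^sub>R inv T y) < r/2)"
      have k: "NN \<nu> ((1 / real (Suc k)) *\<^sub>R inv T y) < r/2"
        unfolding k_def by (rule someI_ex) (rule NN_small[OF pv], use r in simp)
      have "T ((1 / real (Suc k)) *\<^sub>R inv T y) = (1 / real (Suc k)) *\<^sub>R y"
        using linear_scale[OF lin] bij by (simp add: bij_is_surj surj_f_inv_f)
      then show ?thesis unfolding F_def k_def[symmetric] using k NN_zero[OF PNm]
        by (intro CollectI allI impI exI[of _ "(1 / real (Suc k)) *\<^sub>R inv T y"]) auto
    qed
    then show ?thesis by blast
  qed
  have "\<exists>k. M.mtopology interior_of F k \<noteq> {}"
  proof (rule ccontr)
    assume "\<not> ?thesis"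
    then have "M.mtopology interior_of \<Union>(range F) = {}"
      using closed by (intro M.metric_Baire_category_alt[OF mc]) auto
    then show False using cover M.topspace_mtopology interior_of_topspace[of M.mtopology] by simp
  qed
  then obtain k y1 where y1: "y1 \<in> M.mtopology interior_of F k" by blast
  then obtain \<rho> where rho: "\<rho> > 0" "M.mball y1 \<rho> \<subseteq> M.mtopology interior_of F k"
    using openin_interior_of[of M.mtopology "F k"] unfolding M.openin_mtopology by blast
  then have rhoF: "\<And>v. NN \<mu> (y1 - v) < \<rho> \<Longrightarrow> v \<in> F k"
    using interior_of_subset[of M.mtopology "F k"] unfolding M.mball_def by blast
  define K where "K = real (Suc k)"
  have K: "K > 0" "K \<ge> 1" by (auto simp: K_def)
  define cl where "cl u \<longleftrightarrow> (\<forall>\<epsilon>>0. \<exists>a. NN \<nu> a < r/2 \<and> NN \<mu> (u - T a) < \<epsilon>)" for u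
  have clu: "cl ((1/K) *\<^sub>R y1 + u)" if u: "NN \<mu> u < \<rho>/K" for u
  proof -
    define v where "v = y1 + K *\<^sub>R u"
    have "NN \<mu> (y1 - v) = NN \<mu> (real (Suc k) *\<^sub>R u)"
      using NN_minus[OF PNm, of "K *\<^sub>R u"] by (simp add: v_def K_def)
    also have "\<dots> \<le> K * NN \<mu> u" unfolding K_def by (rule NN_nat_scale[OF PNm])
    also have "\<dots> < \<rho>" using u K by (simp add: field_simps)
    finally have "v \<in> F k" by (rule rhoF)
    moreover have "(1 / real (Suc k)) *\<^sub>R v = (1/K) *\<^sub>R y1 + u"
      unfolding v_def K_def by (simp add: scaleR_add_right)
    ultimately show ?thesis unfolding F_def cl_def by auto
  qed
  have y0: "cl ((1/K) *\<^sub>R y1)" using clu[of 0] rho K NN_zero[OF PNm] by simp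
  show ?thesis
  proof (intro exI[of _ "\<rho>/K"] conjI allI impI)
    show "\<rho>/K > 0" using rho K by simp
    fix z \<epsilon> assume z: "NN \<mu> z < \<rho>/K" and e: "(\<epsilon>::real) > 0"
    obtain a where a: "NN \<nu> a < r/2" "NN \<mu> ((1/K) *\<^sub>R y1 + z - T a) < \<epsilon>/2"
      using clu[OF z] e unfolding cl_def by (meson half_gt_zero)
    obtain b where b: "NN \<nu> b < r/2" "NN \<mu> ((1/K) *\<^sub>R y1 - T b) < \<epsilon>/2"
      using y0 e unfolding cl_def by (meson half_gt_zero)
    have "NN \<nu> (a - b) \<le> NN \<nu> a + NN \<nu> (- b)"
      using NN_triangle[OF PNv, of a "-b"] by simp
    then have 1: "NN \<nu> (a - b) < r" using a b NN_minus[OF PNv, of b] by simp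
    have "z - T (a - b) = ((1/K) *\<^sub>R y1 + z - T a) - ((1/K) *\<^sub>R y1 - T b)"
      using linear_diff[OF lin] by (simp add: algebra_simps)
    then have "NN \<mu> (z - T (a - b)) \<le> NN \<mu> ((1/K) *\<^sub>R y1 + z - T a) + NN \<mu> (- ((1/K) *\<^sub>R y1 - T b))"
      using NN_triangle[OF PNm] by (metis diff_conv_add_uminus)
    moreover have "NN \<mu> (- ((1/K) *\<^sub>R y1 - T b)) = NN \<mu> ((1/K) *\<^sub>R y1 - T b)" by (rule NN_minus[OF PNm])
    ultimately have "NN \<mu> (z - T (a - b)) < \<epsilon>" using a b by linarith
    with 1 show "\<exists>x. NN \<nu> x < r \<and> NN \<mu> (z - T x) < \<epsilon>" by blast
  qed
qed


lemma pow_small: assumes "c > 0" "(t::real) > 0" shows "\<exists>N. \<forall>m\<ge>N. c / 2^m < t"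
proof -
  obtain N where N: "c / t < (2::real) ^ N" using real_arch_pow[of 2 "c/t"] by auto
  have "c / 2^m < t" if "m \<ge> N" for m
  proof -
    have "(2::real) ^ N \<le> 2 ^ m" using that by (intro power_increasing) auto
    then have "c / t < 2 ^ m" using N by linarith
    then show ?thesis using assms by (simp add: field_simps)
  qed
  then show ?thesis by blast
qed

lemma key_lemma:
  fixes \<nu> :: "'a::real_vector \<Rightarrow> ereal \<Rightarrow> real" and \<mu> :: "'b::real_vector \<Rightarrow> ereal \<Rightarrow> real"
    and T :: "'a \<Rightarrow> 'b"
  assumes pv: "proper_PN_space \<nu>" and pm: "proper_PN_space \<mu>"
    and cv: "strongly_complete \<nu>" and cm: "strongly_complete \<mu>" and lin: "linear T" and bij: "bij T"
    and cont: "continuous_map (strong_top \<nu>) (strong_top \<mu>) T" and r: "r > 0"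
  shows "\<exists>\<delta>>0. \<forall>y. NN \<mu> y < \<delta> \<longrightarrow> NN \<nu> (inv T y) \<le> 2 * r"
proof -
  have PNv: "PN_space \<nu>" and PNm: "PN_space \<mu>" using pv pm by (auto simp: proper_PN_space_def)
  have "\<forall>n. \<exists>\<delta>>0. \<forall>z. NN \<mu> z < \<delta> \<longrightarrow> (\<forall>\<epsilon>>0. \<exists>x. NN \<nu> x < r / 2^n \<and> NN \<mu> (z - T x) < \<epsilon>)"
    using approx_lemma[OF pv pm cm lin bij] r by simp
  from choice[OF this] obtain \<delta> where \<delta>': "\<forall>n. \<delta> n > 0 \<and> (\<forall>z. NN \<mu> z < \<delta> n \<longrightarrow> (\<forall>\<epsilon>>0. \<exists>x. NN \<nu> x < r / 2^n \<and> NN \<mu> (z - T x) < \<epsilon>))"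
    by blast
  have \<delta>: "\<And>n. \<delta> n > 0"
    "\<And>n z \<epsilon>. NN \<mu> z < \<delta> n \<Longrightarrow> \<epsilon> > 0 \<Longrightarrow> \<exists>x. NN \<nu> x < r / 2^n \<and> NN \<mu> (z - T x) < \<epsilon>"
    using \<delta>' by blast+
  define e where "e n = min (\<delta> n) (1 / 2^n)" for n
  have e0: "e n > 0" for n using \<delta>(1)[of n] by (simp add: e_def)
  have e1: "e n \<le> 1 / 2^n" for n by (simp add: e_def)
  have step: "\<exists>x. NN \<nu> x < r / 2^n \<and> NN \<mu> (z - T x) < e (Suc n)" if "NN \<mu> z < e n" for n z
    using \<delta>(2)[of z n "e (Suc n)"] that e0 by (simp add: e_def)
  define pick where "pick n z = (SOME x. NN \<nu> x < r / 2^n \<and> NN \<mu> (z - T x) < e (Suc n))" for n z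
  have pick: "NN \<nu> (pick n z) < r / 2^n \<and> NN \<mu> (z - T (pick n z)) < e (Suc n)" if "NN \<mu> z < e n" for n z
    unfolding pick_def by (rule someI_ex) (rule step[OF that])
  show ?thesis
  proof (intro exI[of _ "e 0"] conjI allI impI)
    show "e 0 > 0" by (rule e0)
    fix y assume y: "NN \<mu> y < e 0"
    define zs where "zs = rec_nat y (\<lambda>n z. z - T (pick n z))"
    have zs0: "zs 0 = y" and zsS: "zs (Suc n) = zs n - T (pick n (zs n))" for n
      by (simp_all add: zs_def)
    have zsb: "NN \<mu> (zs n) < e n" for n
    proof (induction n)
      case 0 then show ?case using y zs0 by simp
    next
      case (Suc n) then show ?case using pick[OF Suc] zsS by simp
    qed
    define xs where "xs n = pick n (zs n)" for n
    have xsb: "NN \<nu> (xs n) < r / 2^n" for n using pick[OF zsb[of n]] by (simp add: xs_def)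
    define s where "s n = (\<Sum>i<n. xs i)" for n
    have sS: "s (Suc n) = s n + xs n" for n by (simp add: s_def)
    have zs_eq: "zs n = y - T (s n)" for n
    proof (induction n)
      case 0 then show ?case using zs0 linear_0[OF lin] by (simp add: s_def)
    next
      case (Suc n) then show ?case using zsS[of n] linear_add[OF lin] by (simp add: sS xs_def)
    qed
    have sb: "NN \<nu> (s (m + j) - s m) \<le> 2*r/2^m - 2*r/2^(m+j)" for m j
    proof (induction j)
      case 0 then show ?case using NN_zero[OF PNv] by simp
    next
      case (Suc j)
      have "NN \<nu> (s (m + Suc j) - s m) = NN \<nu> ((s (m + j) - s m) + xs (m + j))" by (simp add: sS algebra_simps)
      also have "\<dots> \<le> NN \<nu> (s (m + j) - s m) + NN \<nu> (xs (m + j))"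
        by (rule NN_triangle[OF PNv])
      also have "\<dots> \<le> 2*r/2^m - 2*r/2^(m+j) + r/2^(m+j)" using Suc xsb[of "m+j"] by linarith
      also have "\<dots> = 2*r/2^m - 2*r/2^(m + Suc j)"
      proof -
        have "(2::real)^(m + Suc j) = 2 * 2^(m+j)" by simp
        then have "2*r/2^(m + Suc j) = r/2^(m+j)" by simp
        moreover have "2*r/2^(m+j) = 2 * (r/2^(m+j))" by simp
        ultimately show ?thesis by linarith
      qed
      finally show ?case .
    qed
    have sb2: "NN \<nu> (s n - s m) \<le> 2*r/2^m" if "m \<le> n" for m n
    proof -
      define j where "j = n - m"
      have n: "n = m + j" using that by (simp add: j_def)
      have "2*r/2^(m+j) \<ge> 0" using r by simp
      then show ?thesis unfolding n using sb[of m j] by linarith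
    qed
    have "strong_Cauchy \<nu> s"
      unfolding strong_Cauchy_def
    proof (intro allI impI)
      fix t :: real assume t: "t > 0"
      obtain N where N: "\<forall>m\<ge>N. 2*r / 2^m < t" using pow_small[of "2*r" t] r t by auto
      have "1 - t < \<nu> (s n - s m) (ereal t)" if "m > N" "n > N" for m n
      proof -
        have "NN \<nu> (s n - s m) < t"
        proof (cases "m \<le> n")
          case True
          have "2*r/2^m < t" using N that by simp
          then show ?thesis using sb2[OF True] by linarith
        next
          case False
          have "2*r/2^n < t" using N that by simp
          moreover have "NN \<nu> (s m - s n) \<le> 2*r/2^n" using False by (intro sb2) simp
          ultimately show ?thesis using NN_commute[OF PNv, of "s n" "s m"] by linarith
        qed
        then show ?thesis by (rule NN_less[OF PNv])
      qed
      then show "\<exists>N. \<forall>m>N. \<forall>n>N. 1 - t < \<nu> (s n - s m) (ereal t)" by blast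
    qed
    then obtain x where x: "strong_conv \<nu> s x" using cv unfolding strongly_complete_def by blast
    have conv: "\<exists>N. \<forall>n\<ge>N. NN \<nu> (x - s n) \<le> t" if t0: "t > 0" for t
    proof -
      obtain N where "\<forall>n\<ge>N. s n \<in> strong_nbhd \<nu> x t" using x t0 unfolding strong_conv_def by blast
      then show ?thesis using t0 by (auto simp: strong_nbhd_def intro!: NN_le[OF PNv])
    qed
    have Tx: "T x = y"
    proof -
      have H: "NN \<mu> (y - T x) \<le> u" if u: "u > 0" for u
      proof -
        obtain d where d: "d > 0" "\<And>w. NN \<nu> w < d \<Longrightarrow> NN \<mu> (T w) < u/2"
          using cont0[OF PNv PNm lin cont, of "u/2"] u by auto
        obtain N1 where N1: "\<forall>n\<ge>N1. NN \<nu> (x - s n) \<le> d/2" using conv[of "d/2"] d by auto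
        obtain N2 where N2: "\<forall>m\<ge>N2. 1 / 2^m < u/2" using pow_small[of 1 "u/2"] u by auto
        define n where "n = max N1 N2"
        have n1: "n \<ge> N1" and n2: "n \<ge> N2" by (simp_all add: n_def)
        have "NN \<nu> (x - s n) \<le> d/2" using N1 n1 by simp
        then have "NN \<nu> (s n - x) < d" using d NN_commute[OF PNv, of "s n" x] by linarith
        then have a: "NN \<mu> (T (s n - x)) < u/2" by (rule d(2))
        have "1 / 2^n < u/2" using N2 n2 by simp
        then have b: "NN \<mu> (zs n) < u/2" using zsb[of n] e1[of n] by linarith
        have eq: "y - T x = zs n + T (s n - x)" by (simp add: zs_eq linear_diff[OF lin])
        have "NN \<mu> (y - T x) = NN \<mu> (zs n + T (s n - x))" by (simp only: eq)
        also have "\<dots> \<le> NN \<mu> (zs n) + NN \<mu> (T (s n - x))" by (rule NN_triangle[OF PNm])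
        finally show ?thesis using a b by linarith
      qed
      have "NN \<mu> (y - T x) \<le> 0"
      proof (rule dense_ge)
        fix u :: real assume "0 < u" then show "NN \<mu> (y - T x) \<le> u" by (rule H)
      qed
      then have "NN \<mu> (y - T x) = 0" using NN_nonneg[OF PNm, of "y - T x"] by linarith
      then have "y - T x = 0" by (rule NN_eq0[OF PNm])
      then show ?thesis by simp
    qed
    have "NN \<nu> x \<le> 2 * r"
    proof (rule dense_ge)
      fix u assume u: "2 * r < u"
      obtain N where N: "\<forall>n\<ge>N. NN \<nu> (x - s n) \<le> u - 2*r" using conv[of "u - 2*r"] u by auto
      have "s 0 = 0" by (simp add: s_def)
      then have "NN \<nu> (s N) \<le> 2*r" using sb2[of 0 N] by simp
      moreover have "NN \<nu> x \<le> NN \<nu> (s N) + NN \<nu> (x - s N)"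
        using NN_triangle[OF PNv, of "s N" "x - s N"] by simp
      moreover have "NN \<nu> (x - s N) \<le> u - 2*r" using N by simp
      ultimately show "NN \<nu> x \<le> u" by linarith
    qed
    moreover have "inv T (T x) = x" by (rule inv_f_f[OF bij_is_inj[OF bij]])
    ultimately show "NN \<nu> (inv T y) \<le> 2 * r" using Tx by simp
  qed
qed


theorem corollary4p6:
  fixes \<nu> :: "'a::real_vector \<Rightarrow> ereal \<Rightarrow> real"
    and \<mu> :: "'b::real_vector \<Rightarrow> ereal \<Rightarrow> real"
    and T :: "'a \<Rightarrow> 'b"
  assumes "proper_PN_space \<nu>" and "proper_PN_space \<mu>"
    and "strongly_complete \<nu>" and "strongly_complete \<mu>"
    and "T \<in> bounded_ops \<nu> \<mu>" and "bij T"
  shows "inv T \<in> bounded_ops \<mu> \<nu>"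
proof -
  note pv = assms(1) and pm = assms(2) and cv = assms(3) and cm = assms(4) and bij = assms(6)
  have PNv: "PN_space \<nu>" and PNm: "PN_space \<mu>" using pv pm by (auto simp: proper_PN_space_def)
  have lin: "linear T" and cont: "continuous_map (strong_top \<nu>) (strong_top \<mu>) T"
    using assms(5) by (auto simp: bounded_ops_def)
  have inj: "inj T" and surj: "surj T" using bij by (auto simp: bij_is_inj bij_is_surj)
  have TiT: "T (inv T y) = y" for y using surj by (simp add: surj_f_inv_f)
  have iTT: "inv T (T x) = x" for x using inj by (simp add: inv_f_f)
  have linv: "linear (inv T)"
  proof (rule linearI)
    fix a b
    have "inv T (a + b) = inv T (T (inv T a) + T (inv T b))" by (simp add: TiT)
    also have "\<dots> = inv T (T (inv T a + inv T b))" by (simp add: linear_add[OF lin])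
    finally show "inv T (a + b) = inv T a + inv T b" by (simp add: iTT)
  next
    fix c a
    have "inv T (c *\<^sub>R a) = inv T (c *\<^sub>R T (inv T a))" by (simp add: TiT)
    also have "\<dots> = inv T (T (c *\<^sub>R inv T a))" by (simp add: linear_scale[OF lin])
    finally show "inv T (c *\<^sub>R a) = c *\<^sub>R inv T a" by (simp add: iTT)
  qed
  have "continuous_map (strong_top \<mu>) (strong_top \<nu>) (inv T)"
    unfolding continuous_map_def topspace_strong[OF PNv] topspace_strong[OF PNm]
  proof (intro conjI allI impI)
    show "inv T \<in> UNIV \<rightarrow> UNIV" by simp
    fix U assume U: "openin (strong_top \<nu>) U"
    show "openin (strong_top \<mu>) {x \<in> UNIV. inv T x \<in> U}"
      unfolding openin_strong[OF PNm]
    proof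
      fix y assume "y \<in> {x \<in> UNIV. inv T x \<in> U}"
      then have yU: "inv T y \<in> U" by simp
      obtain t where t: "t > 0" "\<And>q. NN \<nu> (inv T y - q) < t \<Longrightarrow> q \<in> U"
        using U yU unfolding openin_strong[OF PNv] by blast
      obtain \<delta> where d: "\<delta> > 0" "\<And>z. NN \<mu> z < \<delta> \<Longrightarrow> NN \<nu> (inv T z) \<le> 2 * (t/3)"
        using key_lemma[OF pv pm cv cm lin bij cont, of "t/3"] t by auto
      have "inv T q \<in> U" if q: "NN \<mu> (y - q) < \<delta>" for q
      proof -
        have "NN \<nu> (inv T (y - q)) \<le> 2 * (t/3)" by (rule d(2)[OF q])
        moreover have "inv T (y - q) = inv T y - inv T q" by (rule linear_diff[OF linv])
        ultimately have "NN \<nu> (inv T y - inv T q) < t" using t by simp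
        then show ?thesis by (rule t(2))
      qed
      then show "\<exists>t>0. \<forall>q. NN \<mu> (y - q) < t \<longrightarrow> q \<in> {x \<in> UNIV. inv T x \<in> U}"
        using d(1) by blast
    qed
  qed
  then show ?thesis using linv by (simp add: bounded_ops_def)
qed

end
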